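(* Let $n,m\ge1$, $p_{n,m}$ stable of degree $n$ in $z$ and $m$ in $w$, and let $a_0,\dots,a_{m-1}$ be as in the context. In $L^2\!\left(\frac{d\sigma}{|p_{n,m}|^2}\right)$, for all $j_1,j_2\in\mathbb{Z}$ and $0\le k_1,k_2\le m-1$, $$\langle z^{j_1+n}w^{k_1},\,z^{j_2}a_{k_2}\rangle=0\quad\text{unless } j_1=j_2 \text{ and } k_1=k_2,$$ and $\langle z^{j+n}w^{k},z^ja_k\rangle\neq0$. Consequently, if $f$ lies in $S=\overline{\operatorname{span}}\{z^jw^k:j\in\mathbb{Z},0\le k<m\}$ and $f\perp z^ja_k$, then the Fourier coefficient $\hat f(j+n,k)=0$.
   Context: $\sigma$ is normalized Lebesgue measure on $\mathbb{T}^2$; $p_{n,m}$ is stable if it has no zeros in $\{|z|\le1,|w|\le1\}$. Inner product $\langle f,g\rangle=\int_{\mathbb{T}^2}f\bar g\,\frac{d\sigma}{|p_{n,m}|^2}$; closures are taken in this space (which equals $L^2(\sigma)$ as a set). $\tilde p_{n,m}(z,w)=z^nw^m\overline{p_{n,m}(1/\bar z,1/\bar w)}$; $L(z,w;\eta)=z^n\frac{p_{n,m}(z,w)\overline{p_{n,m}(1/\bar z,\eta)}-\tilde p_{n,m}(z,w)\overline{\tilde p_{n,m}(1/\bar z,\eta)}}{1-w\bar\eta}$, a polynomial in $z,w,\bar\eta$, and $a_j$ are defined by $L=\sum_{j=0}^{m-1}a_j(z,w)\bar\eta^j$. $\hat f(i,j)$ denotes the $(i,j)$ Fourier coefficient of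 $f$ on $\mathbb{T}^2$. *)

theory Defs
  imports "HOL-Analysis.Analysis"
begin

definition poly2 :: "(nat \<Rightarrow> nat \<Rightarrow> complex) \<Rightarrow> nat \<Rightarrow> nat \<Rightarrow> complex \<Rightarrow> complex \<Rightarrow> complex" where
  "poly2 c n m z w = (\<Sum>i\<le>n. \<Sum>j\<le>m. c i j * z ^ i * w ^ j)"

definition bidegree :: "(nat \<Rightarrow> nat \<Rightarrow> complex) \<Rightarrow> nat \<Rightarrow> nat \<Rightarrow> bool" where
  "bidegree c n m \<longleftrightarrow> (\<exists>j\<le>m. c n j \<noteq> 0) \<and> (\<exists>i\<le>n. c i m \<noteq> 0)"

definition stable2 :: "(nat \<Rightarrow> nat \<Rightarrow> complex) \<Rightarrow> nat \<Rightarrow> nat \<Rightarrow> bool" where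
  "stable2 c n m \<longleftrightarrow> (\<forall>z w. cmod z \<le> 1 \<longrightarrow> cmod w \<le> 1 \<longrightarrow> poly2 c n m z w \<noteq> 0)"

text \<open>Reflected polynomial z^n w^m conj(p(1/conj z, 1/conj w)), written as the
  polynomial it is (reflected, conjugated coefficients).\<close>
definition refl2 :: "(nat \<Rightarrow> nat \<Rightarrow> complex) \<Rightarrow> nat \<Rightarrow> nat \<Rightarrow> complex \<Rightarrow> complex \<Rightarrow> complex" where
  "refl2 c n m z w = (\<Sum>i\<le>n. \<Sum>j\<le>m. cnj (c i j) * z ^ (n - i) * w ^ (m - j))"

definition tor :: "(complex \<Rightarrow> complex \<Rightarrow> complex) \<Rightarrow> real \<times> real \<Rightarrow> complex" where
  "tor f x = f (cis (fst x)) (cis (snd x))"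

definition T2 :: "(real \<times> real) set" where
  "T2 = {0..2*pi} \<times> {0..2*pi}"

text \<open>Inner product of L^2(d\<sigma>/|p|^2), \<sigma> normalised Lebesgue measure on T^2.\<close>
definition ipw :: "(complex \<Rightarrow> complex \<Rightarrow> complex) \<Rightarrow> (complex \<Rightarrow> complex \<Rightarrow> complex)
    \<Rightarrow> (complex \<Rightarrow> complex \<Rightarrow> complex) \<Rightarrow> complex" where
  "ipw p f g = complex_of_real (1 / (4 * pi ^ 2)) *
     (LINT x:T2|lborel. tor f x * cnj (tor g x) / complex_of_real ((cmod (tor p x))\<^sup>2))"

definition normw2 :: "(complex \<Rightarrow> complex \<Rightarrow> complex) \<Rightarrow> (complex \<Rightarrow> complex \<Rightarrow> complex) \<Rightarrow> real" where
  "normw2 p f = (1 / (4 * pi ^ 2)) *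
     (LINT x:T2|lborel. (cmod (tor f x))\<^sup>2 / (cmod (tor p x))\<^sup>2)"

text \<open>Membership in L^2(\<sigma>) (= L^2(d\<sigma>/|p|^2) as a set).\<close>
definition L2T :: "(complex \<Rightarrow> complex \<Rightarrow> complex) \<Rightarrow> bool" where
  "L2T f \<longleftrightarrow> tor f \<in> borel_measurable lborel \<and>
     set_integrable lborel T2 (\<lambda>x. (cmod (tor f x))\<^sup>2)"

definition trig :: "(int \<times> nat) set \<Rightarrow> (int \<times> nat \<Rightarrow> complex) \<Rightarrow> complex \<Rightarrow> complex \<Rightarrow> complex" where
  "trig F d z w = (\<Sum>jk\<in>F. d jk * z powi (fst jk) * w ^ (snd jk))"

text \<open>S = closed span of {z^j w^k : j \<in> \<int>, 0 \<le> k < m} in L^2(d\<sigma>/|p|^2).\<close>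
definition inS :: "(complex \<Rightarrow> complex \<Rightarrow> complex) \<Rightarrow> nat \<Rightarrow> (complex \<Rightarrow> complex \<Rightarrow> complex) \<Rightarrow> bool" where
  "inS p m f \<longleftrightarrow> L2T f \<and>
     (\<forall>e>0. \<exists>F d. finite F \<and> F \<subseteq> UNIV \<times> {..<m} \<and>
        normw2 p (\<lambda>z w. f z w - trig F d z w) < e)"

definition fourier2 :: "(complex \<Rightarrow> complex \<Rightarrow> complex) \<Rightarrow> int \<Rightarrow> int \<Rightarrow> complex" where
  "fourier2 f i j = complex_of_real (1 / (4 * pi ^ 2)) *
     (LINT x:T2|lborel. tor f x * cis (- (of_int i * fst x)) * cis (- (of_int j * snd x)))"

end

theory Submission
  imports Defs
begin


lemma vd_cis_lin:
  fixes r :: real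
  shows "((\<lambda>t. cis (r * t)) has_vector_derivative (\<i> * of_real r * cis (r * t))) (at t within S)"
  unfolding has_vector_derivative_def
  by (rule derivative_eq_intros refl | simp)+ (auto simp: fun_eq_iff scaleR_conv_of_real algebra_simps)

lemma integral_cis_int:
  fixes r :: int
  shows "integral {0..2*pi} (\<lambda>t. cis (of_int r * t)) = (if r = 0 then 2*pi else 0)"
proof (cases "r = 0")
  case True then show ?thesis by (simp add: scaleR_conv_of_real)
next
  case False
  have "((\<lambda>t. cis (of_int r * t)) has_integral
        (cis (of_int r * (2*pi)) / (\<i> * of_int r) - cis (of_int r * 0) / (\<i> * of_int r))) {0..2*pi}"
  proof (rule fundamental_theorem_of_calculus)
    fix t :: real assume "t \<in> {0..2*pi}"
    have "((\<lambda>t. cis (of_int r * t) / (\<i> * of_int r)) has_vector_derivative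
       ((\<i> * of_real (of_int r) * cis (of_int r * t)) / (\<i> * of_int r))) (at t within {0..2*pi})"
      using vd_cis_lin[of "of_int r" t "{0..2*pi}"] 
      by (intro has_vector_derivative_divide) 
    then show "((\<lambda>t. cis (of_int r * t) / (\<i> * of_int r)) has_vector_derivative
       cis (of_int r * t)) (at t within {0..2*pi})" using False by simp
  qed simp
  moreover have "cis (of_int r * (2*pi)) = 1"
    by (metis cis_power_int cis_2pi power_int_1_left)
  ultimately show ?thesis using False by (simp add: integral_unique)
qed

lemma cauchy_circle:
  fixes C :: "nat \<Rightarrow> complex" and r :: nat
  assumes nz: "\<And>w. cmod w \<le> 1 \<Longrightarrow> (\<Sum>j\<le>m. C j * w^j) \<noteq> 0" and r: "r \<ge> 1"
  shows "integral {0..2*pi} (\<lambda>t. cis (real r * t) / (\<Sum>j\<le>m. C j * cis t ^ j)) = 0"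
proof -
  define q where "q w = (\<Sum>j\<le>m. C j * w^j)" for w
  define qd where "qd w = (\<Sum>j\<le>m. C j * (of_nat j * w^(j-1)))" for w
  have dq: "(q has_field_derivative qd w) (at w)" for w
    unfolding q_def qd_def
    by (intro DERIV_sum DERIV_cmult) (rule DERIV_cong[OF DERIV_power[OF DERIV_ident]], simp)
  define h where "h w = w^r / q w" for w
  define hd where "hd w = (of_nat r * w^(r-1) * q w - w^r * qd w) / (q w * q w)" for w
  have dh: "(h has_field_derivative hd w) (at w)" if "cmod w \<le> 1" for w
    unfolding h_def hd_def
    by (rule DERIV_cong[OF DERIV_divide[OF DERIV_power[OF DERIV_ident] dq]]) (use nz[OF that] in \<open>simp_all add: q_def\<close>)
  have qnz: "q w \<noteq> 0" if "cmod w \<le> 1" for w using nz[OF that] by (simp add: q_def)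
  have cq: "continuous_on S q" for S unfolding q_def by (intro continuous_intros)
  have cqd: "continuous_on S qd" for S unfolding qd_def by (intro continuous_intros)
  have ch: "continuous_on (cball 0 1) h" unfolding h_def
    by (intro continuous_intros cq) (auto simp: qnz)
  have chd: "continuous_on (cball 0 1) hd" unfolding hd_def
    by (intro continuous_intros cq cqd) (auto simp: qnz)
  define U where "U = cball (0::complex) 1"
  define f where "f x t = h (x * cis t)" for x t
  define fx where "fx x t = hd (x * cis t) * cis t" for x t
  have inU: "x * cis t \<in> cball 0 1" if "x \<in> U" for x t
    using that by (simp add: U_def norm_mult)
  have L: "((\<lambda>x. integral (cbox 0 (2*pi)) (f x)) has_field_derivative integral (cbox 0 (2*pi)) (fx x0)) (at x0 within U)"
    if "x0 \<in> U" for x0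
  proof (rule leibniz_rule_field_derivative)
    fix x t assume "x \<in> U" "t \<in> cbox 0 (2*pi)"
    have dg: "((\<lambda>x. x * cis t) has_field_derivative cis t) (at x within U)"
      by (rule derivative_eq_intros refl | simp)+
    show "((\<lambda>x. f x t) has_field_derivative fx x t) (at x within U)"
      unfolding f_def fx_def
      using DERIV_chain2[OF dh dg] inU[OF \<open>x \<in> U\<close>, of t] by simp
  next
    fix x assume "x \<in> U"
    have "continuous_on (cbox 0 (2*pi)) (f x)" unfolding f_def
      by (rule continuous_on_compose2[OF ch]) (auto intro!: continuous_intros inU[OF \<open>x \<in> U\<close>])
    then show "f x integrable_on cbox 0 (2*pi)" by (rule integrable_continuous)
  next
    show "continuous_on (U \<times> cbox 0 (2*pi)) (\<lambda>(x, t). fx x t)" unfolding fx_def case_prod_unfold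
      by (intro continuous_intros continuous_on_compose2[OF chd]) (auto intro: inU)
  qed (use that in \<open>auto simp: U_def\<close>)
  have Z: "integral (cbox 0 (2*pi)) (fx x) = 0" if "x \<in> U" for x
  proof (cases "x = 0")
    case True
    have "integral {0..2*pi} (\<lambda>t. hd 0 * cis t) = hd 0 * integral {0..2*pi} (\<lambda>t. cis (of_int 1 * t))"
      by simp
    also have "\<dots> = 0" by (subst integral_cis_int) simp
    finally have e: "integral {0..2*pi} (\<lambda>t. hd 0 * cis t) = 0" .
    have "fx 0 = (\<lambda>t. hd 0 * cis t)" by (simp add: fx_def fun_eq_iff mult.commute)
    then show ?thesis using True e by (simp add: cbox_interval)
  next
    case False
    have "((\<lambda>t. \<i> * x * cis t * hd (x * cis t)) has_integral (h (x * cis (2*pi)) - h (x * cis 0))) {0..2*pi}"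
    proof (rule fundamental_theorem_of_calculus)
      fix t :: real assume "t \<in> {0..2*pi}"
      have d1: "((\<lambda>t. x * cis t) has_vector_derivative (x * (\<i> * of_real 1 * cis (1 * t)))) (at t)"
        using vd_cis_lin[of 1 t UNIV] by (intro has_vector_derivative_mult_right) simp
      have "((h \<circ> (\<lambda>t. x * cis t)) has_vector_derivative (x * (\<i> * of_real 1 * cis (1 * t))) * hd (x * cis t)) (at t)"
        by (rule field_vector_diff_chain_at[OF d1 dh]) (use inU[OF that] in simp)
      then show "((\<lambda>t. h (x * cis t)) has_vector_derivative \<i> * x * cis t * hd (x * cis t)) (at t within {0..2*pi})"
        by (auto simp: o_def algebra_simps intro: has_vector_derivative_at_within)
    qed simp
    then have "((\<lambda>t. \<i> * x * cis t * hd (x * cis t)) has_integral 0) {0..2*pi}" by simp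
    then have "((\<lambda>t. (1 / (\<i> * x)) * (\<i> * x * cis t * hd (x * cis t))) has_integral (1 / (\<i> * x)) * 0) {0..2*pi}"
      by (rule has_integral_mult_right)
    moreover have "fx x = (\<lambda>t. (1 / (\<i> * x)) * (\<i> * x * cis t * hd (x * cis t)))"
      using False by (simp add: fx_def fun_eq_iff field_simps)
    ultimately have "(fx x has_integral 0) {0..2*pi}" by simp
    then show ?thesis by (simp add: integral_unique)
  qed
  have "\<exists>c. \<forall>x\<in>U. integral (cbox 0 (2*pi)) (f x) = c"
    by (rule has_field_derivative_zero_constant) (use L Z in \<open>auto simp: U_def\<close>)
  then have "integral (cbox 0 (2*pi)) (f 1) = integral (cbox 0 (2*pi)) (f 0)"
    by (metis U_def centre_in_cball mem_cball_0 norm_one order_refl zero_le_one)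
  also have "f 0 = (\<lambda>t. 0)" using r by (simp add: fun_eq_iff f_def h_def)
  then have "integral (cbox 0 (2*pi)) (f 0) = 0" by simp
  finally have "integral (cbox 0 (2*pi)) (f 1) = 0" .
  moreover have "f 1 = (\<lambda>t. cis (real r * t) / (\<Sum>j\<le>m. C j * cis t ^ j))"
  proof
    fix t
    have "cis t ^ r = cis (real r * t)" by (rule Complex.DeMoivre)
    then show "f 1 t = cis (real r * t) / (\<Sum>j\<le>m. C j * cis t ^ j)"
      by (simp add: f_def h_def q_def)
  qed
  ultimately show ?thesis by (simp add: cbox_interval)
qed


lemma sum_atMost_rev: "(\<Sum>i\<le>(m::nat). g i) = (\<Sum>i\<le>m. g (m - i))"
  by (rule sum.reindex_bij_witness[where i="\<lambda>i. m - i" and j="\<lambda>i. m - i"]) auto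

lemma shift_poly:
  fixes w x :: complex and d :: "nat \<Rightarrow> complex"
  shows "(1 - w*x) * (\<Sum>k<m. d k * x^k) =
     (\<Sum>l\<le>m. ((if l < m then d l else 0) - w * (if l = 0 then 0 else d (l-1))) * x^l)"
proof (induction m)
  case 0 then show ?case by simp
next
  case (Suc m)
  have e1: "(\<Sum>l\<le>m. ((if l < Suc m then d l else 0) - w * (if l = 0 then 0 else d (l-1))) * x^l)
     = (\<Sum>l\<le>m. ((if l < m then d l else 0) - w * (if l = 0 then 0 else d (l-1))) * x^l) + d m * x^m"
  proof -
    have "(\<Sum>l\<le>m. ((if l < Suc m then d l else 0) - w * (if l = 0 then 0 else d (l-1))) * x^l)
      = (\<Sum>l\<le>m. ((if l < m then d l else 0) - w * (if l = 0 then 0 else d (l-1))) * x^l + (if l = m then d m * x^m else 0))"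
      by (rule sum.cong) (auto simp: algebra_simps)
    then show ?thesis by (simp add: sum.distrib)
  qed
  have "(1 - w*x) * (\<Sum>k<Suc m. d k * x^k) = (1 - w*x) * (\<Sum>k<m. d k * x^k) + (1 - w*x) * d m * x^m"
    by (simp add: algebra_simps)
  also have "\<dots> = (\<Sum>l\<le>Suc m. ((if l < Suc m then d l else 0) - w * (if l = 0 then 0 else d (l-1))) * x^l)"
    using Suc.IH e1 by (simp add: algebra_simps)
  finally show ?case .
qed

definition Cc :: "(nat \<Rightarrow> nat \<Rightarrow> complex) \<Rightarrow> nat \<Rightarrow> complex \<Rightarrow> nat \<Rightarrow> complex" where
  "Cc c n z j = (\<Sum>i\<le>n. c i j * z^i)"

definition qC :: "(nat \<Rightarrow> complex) \<Rightarrow> nat \<Rightarrow> complex \<Rightarrow> complex" where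
  "qC C m w = (\<Sum>j\<le>m. C j * w^j)"

definition Qt :: "(nat \<Rightarrow> complex) \<Rightarrow> nat \<Rightarrow> complex \<Rightarrow> complex" where
  "Qt C m w = (\<Sum>j\<le>m. cnj (C j) * w^(m-j))"

lemma poly2_Cc: "poly2 c n m z w = qC (Cc c n z) m w"
  unfolding poly2_def qC_def Cc_def
  by (subst sum.swap) (simp add: sum_distrib_right sum_distrib_left mult.assoc mult.commute mult.left_commute)

lemma circ_cnj: "cmod z = 1 \<Longrightarrow> cnj z * z = 1"
  by (metis complex_norm_square mult.commute of_real_1 power_one)

lemma circ_inv: "cmod z = 1 \<Longrightarrow> 1 / cnj z = z"
proof -
  assume a: "cmod z = 1"
  then have "cnj z \<noteq> 0" by auto
  then show ?thesis using circ_cnj[OF a] by (simp add: field_simps)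
qed

lemma cnj_qC: "cnj (qC C m (cnj x)) = (\<Sum>j\<le>m. cnj (C j) * x^j)"
  by (simp add: qC_def)

lemma refl2_Cc:
  assumes "cmod z = 1"
  shows "refl2 c n m z v = z^n * Qt (Cc c n z) m v"
proof -
  have zp: "z^(n-i) = z^n * cnj z ^ i" if "i \<le> n" for i
  proof -
    have "z^n * cnj z ^ i = z^(n-i) * (cnj z * z)^i"
      using that by (simp add: power_add[symmetric] power_mult_distrib algebra_simps)
    then show ?thesis using circ_cnj[OF assms] by simp
  qed
  show ?thesis
    unfolding refl2_def Qt_def Cc_def
    by (subst sum.swap) (simp add: sum_distrib_left sum_distrib_right zp mult.assoc mult.commute mult.left_commute)
qed

lemma cnj_Qt: "cnj (Qt C m (cnj x)) = (\<Sum>j\<le>m. C j * x^(m-j))"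
  by (simp add: Qt_def)

lemma Qt_circle:
  assumes "cmod w = 1"
  shows "cnj (Qt C m w) = cnj w ^ m * qC C m w"
proof -
  have "cnj w ^ (m-j) = cnj w ^ m * w ^ j" if "j \<le> m" for j
  proof -
    have "cnj w ^ m * w ^ j = cnj w^(m-j) * (cnj w * w)^j"
      using that by (simp add: power_add[symmetric] power_mult_distrib algebra_simps)
    then show ?thesis using circ_cnj[OF assms] by simp
  qed
  then show ?thesis unfolding Qt_def qC_def
    by (simp add: sum_distrib_left mult.assoc mult.commute mult.left_commute)
qed

definition Ee :: "(nat \<Rightarrow> nat \<Rightarrow> complex) \<Rightarrow> nat \<Rightarrow> nat \<Rightarrow> complex \<Rightarrow> complex \<Rightarrow> nat \<Rightarrow> complex" where
  "Ee c n m z w l = qC (Cc c n z) m w * cnj (Cc c n z l) - Qt (Cc c n z) m w * Cc c n z (m - l)"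

lemma a_formula:
  fixes c :: "nat \<Rightarrow> nat \<Rightarrow> complex" and a :: "nat \<Rightarrow> complex \<Rightarrow> complex \<Rightarrow> complex"
  assumes a_def: "\<forall>z w \<eta>. z \<noteq> 0 \<longrightarrow>
        (1 - w * cnj \<eta>) * (\<Sum>j<m. a j z w * cnj \<eta> ^ j) =
        z ^ n * (poly2 c n m z w * cnj (poly2 c n m (1 / cnj z) \<eta>)
                 - refl2 c n m z w * cnj (refl2 c n m (1 / cnj z) \<eta>))"
  and z: "cmod z = 1" and k: "k < m"
  shows "a k z w = z^n * (\<Sum>l\<le>k. w^(k-l) * Ee c n m z w l)"
proof -
  define C where "C = Cc c n z"
  define E where "E = Ee c n m z w"
  have zz: "z^n * cnj z^n = 1" using circ_cnj[OF z] by (metis mult.commute power_mult_distrib power_one)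
  have rev: "(\<Sum>j\<le>m. C j * x^(m-j)) = (\<Sum>l\<le>m. C (m-l) * x^l)" for x
    by (subst sum_atMost_rev) (rule sum.cong, auto)
  have R: "z^n * (poly2 c n m z w * cnj (poly2 c n m (1/cnj z) (cnj x)) - refl2 c n m z w * cnj (refl2 c n m (1/cnj z) (cnj x)))
      = z^n * (\<Sum>l\<le>m. E l * x^l)" for x
  proof -
    have "cnj (poly2 c n m (1/cnj z) (cnj x)) = (\<Sum>j\<le>m. cnj (C j) * x^j)"
      by (simp add: circ_inv[OF z] poly2_Cc C_def qC_def)
    moreover have "cnj (refl2 c n m (1/cnj z) (cnj x)) = cnj z ^ n * (\<Sum>j\<le>m. C j * x^(m-j))"
      by (simp add: circ_inv[OF z] refl2_Cc[OF z] C_def Qt_def)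
    moreover have "refl2 c n m z w = z^n * Qt C m w" by (simp add: refl2_Cc[OF z] C_def)
    moreover have "poly2 c n m z w = qC C m w" by (simp add: poly2_Cc C_def)
    ultimately have "z^n * (poly2 c n m z w * cnj (poly2 c n m (1/cnj z) (cnj x)) - refl2 c n m z w * cnj (refl2 c n m (1/cnj z) (cnj x)))
       = z^n * (qC C m w * (\<Sum>j\<le>m. cnj (C j) * x^j) - (z^n * cnj z ^ n) * Qt C m w * (\<Sum>l\<le>m. C (m-l) * x^l))"
      by (simp add: rev algebra_simps)
    also have "\<dots> = z^n * (\<Sum>l\<le>m. E l * x^l)"
      by (simp add: zz E_def Ee_def C_def[symmetric] sum_distrib_left sum_subtractf[symmetric] algebra_simps)
    finally show ?thesis .
  qed
  have I: "(1 - w*x) * (\<Sum>k<m. a k z w * x^k) = z^n * (\<Sum>l\<le>m. E l * x^l)" for x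
  proof -
    have "z \<noteq> 0" using z by auto
    then show ?thesis using a_def[rule_format, of z w "cnj x"] R[of x] by simp
  qed
  define co where "co l = ((if l < m then a l z w else 0) - w * (if l = 0 then 0 else a (l-1) z w))" for l
  have "\<forall>x. (\<Sum>l\<le>m. (co l - z^n * E l) * x^l) = 0"
  proof
    fix x
    have "(\<Sum>l\<le>m. co l * x^l) = z^n * (\<Sum>l\<le>m. E l * x^l)"
      using I[of x] shift_poly[of w x "\<lambda>k. a k z w" m] by (simp add: co_def)
    then show "(\<Sum>l\<le>m. (co l - z^n * E l) * x^l) = 0"
      by (simp add: algebra_simps sum_subtractf sum_distrib_left)
  qed
  then have co: "co l = z^n * E l" if "l \<le> m" for l
    using that by (subst (asm) polyfun_eq_0) auto
  show ?thesis using k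
  proof (induction k)
    case 0 then show ?case using co[of 0] by (simp add: co_def E_def)
  next
    case (Suc k)
    then have "a (Suc k) z w - w * a k z w = z^n * E (Suc k)" using co[of "Suc k"] by (simp add: co_def)
    then have "a (Suc k) z w = w * (z ^ n * (\<Sum>l\<le>k. w ^ (k - l) * E l)) + z^n * E (Suc k)"
      using Suc by (simp add: E_def algebra_simps)
    also have "\<dots> = z ^ n * (\<Sum>l\<le>Suc k. w ^ (Suc k - l) * E l)"
      by (simp add: sum_distrib_left algebra_simps Suc_diff_le)
    finally show ?case by (simp add: E_def)
  qed
qed



lemma cis_pow_conv: "cis t ^ k = cis (real k * t)" by (rule Complex.DeMoivre)

lemma w_part:
  fixes C :: "nat \<Rightarrow> complex"
  assumes q: "qC C m (cis t) \<noteq> 0" and l: "l \<le> k2"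
  shows "cis t ^ k1 * cnj (cis t ^ (k2 - l)) * cnj (qC C m (cis t) * cnj (C l) - Qt C m (cis t) * C (m - l))
          / (qC C m (cis t) * cnj (qC C m (cis t)))
   = C l * cis (of_int (int k1 + int l - int k2) * t) / qC C m (cis t)
     - cnj (C (m - l)) * cnj (cis (of_int (int m + int k2 - int k1 - int l) * t) / qC C m (cis t))"
proof -
  define q where "q = qC C m (cis t)"
  define w where "w = cis t"
  have qc: "cnj q \<noteq> 0" using q by (simp add: q_def)
  have Qc: "cnj (Qt C m w) = cnj w ^ m * q" unfolding q_def w_def by (rule Qt_circle) simp
  have A: "w^k1 * cnj w^(k2-l) = cis (of_int (int k1 + int l - int k2) * t)"
    unfolding w_def using l by (simp add: cis_pow_conv cis_cnj cis_mult of_nat_diff algebra_simps)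
  have B: "w^k1 * cnj w^(k2-l) * cnj w ^ m = cnj (cis (of_int (int m + int k2 - int k1 - int l) * t))"
    unfolding w_def using l by (simp add: cis_pow_conv cis_cnj cis_mult of_nat_diff algebra_simps)
  have "w ^ k1 * cnj (w ^ (k2 - l)) * cnj (q * cnj (C l) - Qt C m w * C (m - l)) / (q * cnj q)
      = (w^k1 * cnj w^(k2-l)) * C l / q - (w^k1 * cnj w^(k2-l) * cnj w ^ m) * cnj (C (m - l)) / cnj q"
    using q qc by (simp add: Qc q_def field_simps)
  also have "\<dots> = C l * cis (of_int (int k1 + int l - int k2) * t) / q
     - cnj (C (m - l)) * cnj (cis (of_int (int m + int k2 - int k1 - int l) * t) / q)"
    unfolding B unfolding A by (simp add: mult.commute)
  finally show ?thesis by (simp add: q_def w_def)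
qed

definition Gw :: "(nat \<Rightarrow> nat \<Rightarrow> complex) \<Rightarrow> nat \<Rightarrow> nat \<Rightarrow> nat \<Rightarrow> nat \<Rightarrow> real \<Rightarrow> real \<Rightarrow> complex" where
  "Gw c n m k1 k2 s t = (\<Sum>l\<le>k2. Cc c n (cis s) l * cis (of_int (int k1 + int l - int k2) * t) / qC (Cc c n (cis s)) m (cis t)
     - cnj (Cc c n (cis s) (m - l)) * cnj (cis (of_int (int m + int k2 - int k1 - int l) * t) / qC (Cc c n (cis s)) m (cis t)))"

lemma stable_q: "stable2 c n m \<Longrightarrow> cmod w \<le> 1 \<Longrightarrow> qC (Cc c n (cis s)) m w \<noteq> 0"
  unfolding stable2_def by (metis norm_cis order_refl poly2_Cc)

lemma pointwise:
  fixes c :: "nat \<Rightarrow> nat \<Rightarrow> complex" and a :: "nat \<Rightarrow> complex \<Rightarrow> complex \<Rightarrow> complex"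
  assumes a_def: "\<forall>z w \<eta>. z \<noteq> 0 \<longrightarrow>
        (1 - w * cnj \<eta>) * (\<Sum>j<m. a j z w * cnj \<eta> ^ j) =
        z ^ n * (poly2 c n m z w * cnj (poly2 c n m (1 / cnj z) \<eta>)
                 - refl2 c n m z w * cnj (refl2 c n m (1 / cnj z) \<eta>))"
  and st: "stable2 c n m" and k2: "k2 < m"
  shows "tor (\<lambda>z w. z powi (j1 + int n) * w ^ k1) x * cnj (tor (\<lambda>z w. z powi j2 * a k2 z w) x)
      / complex_of_real ((cmod (tor (poly2 c n m) x))\<^sup>2)
    = cis (of_int (j1 - j2) * fst x) * Gw c n m k1 k2 (fst x) (snd x)"
proof -
  obtain s t where x: "x = (s, t)" by (cases x)
  define z where "z = cis s"
  define w where "w = cis t"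
  define C where "C = Cc c n z"
  define q where "q = qC C m w"
  have q0: "q \<noteq> 0" unfolding q_def C_def z_def w_def by (rule stable_q[OF st]) simp
  have aa: "a k2 z w = z^n * (\<Sum>l\<le>k2. w^(k2-l) * Ee c n m z w l)"
    by (rule a_formula[OF a_def _ k2]) (simp add: z_def)
  have pp: "complex_of_real ((cmod (poly2 c n m z w))\<^sup>2) = q * cnj q"
    unfolding complex_norm_square by (simp add: poly2_Cc q_def C_def)
  have zpart: "z powi (j1 + int n) * cnj (z powi j2) * cnj (z ^ n) = cis (of_int (j1 - j2) * s)"
    by (simp add: z_def cis_power_int cis_pow_conv cis_cnj cis_mult algebra_simps)
  have "tor (\<lambda>z w. z powi (j1 + int n) * w ^ k1) x * cnj (tor (\<lambda>z w. z powi j2 * a k2 z w) x)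
      / complex_of_real ((cmod (tor (poly2 c n m) x))\<^sup>2)
    = (z powi (j1 + int n) * cnj (z powi j2) * cnj (z ^ n)) *
      (\<Sum>l\<le>k2. w^k1 * cnj (w^(k2-l)) * cnj (Ee c n m z w l) / (q * cnj q))"
    unfolding x tor_def fst_conv snd_conv z_def[symmetric] w_def[symmetric] aa pp
    by (simp add: sum_divide_distrib sum_distrib_left algebra_simps)
  also have "(\<Sum>l\<le>k2. w^k1 * cnj (w^(k2-l)) * cnj (Ee c n m z w l) / (q * cnj q)) = Gw c n m k1 k2 s t"
    unfolding Gw_def
  proof (rule sum.cong[OF refl])
    fix l assume "l \<in> {..k2}"
    then show "w^k1 * cnj (w^(k2-l)) * cnj (Ee c n m z w l) / (q * cnj q) =
      Cc c n (cis s) l * cis (of_int (int k1 + int l - int k2) * t) / qC (Cc c n (cis s)) m (cis t)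
     - cnj (Cc c n (cis s) (m - l)) * cnj (cis (of_int (int m + int k2 - int k1 - int l) * t) / qC (Cc c n (cis s)) m (cis t))"
      using w_part[of "Cc c n (cis s)" m t l k2 k1] q0
      by (simp add: Ee_def q_def C_def z_def w_def)
  qed
  finally show ?thesis using zpart x by simp
qed



lemma cont_q: "continuous_on S (\<lambda>t. qC C m (cis t))"
  unfolding qC_def by (intro continuous_intros)

lemma intble_I:
  assumes "\<And>t. qC C m (cis t) \<noteq> 0"
  shows "(\<lambda>t. cis (of_int r * t) / qC C m (cis t)) integrable_on {0..2*pi}"
  by (intro integrable_continuous_interval continuous_intros cont_q) (use assms in auto)

lemma I_zero:
  assumes nz: "\<And>w. cmod w \<le> 1 \<Longrightarrow> qC C m w \<noteq> 0" and r: "r \<ge> 1"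
  shows "integral {0..2*pi} (\<lambda>t. cis (of_int r * t) / qC C m (cis t)) = 0"
proof -
  have "integral {0..2*pi} (\<lambda>t. cis (real (nat r) * t) / (\<Sum>j\<le>m. C j * cis t ^ j)) = 0"
    by (rule cauchy_circle) (use nz r in \<open>auto simp: qC_def\<close>)
  moreover have "real (nat r) = of_int r" using r by simp
  ultimately show ?thesis by (simp add: qC_def)
qed

lemma key_sum:
  assumes nz: "\<And>w. cmod w \<le> 1 \<Longrightarrow> qC C m w \<noteq> 0"
  shows "(\<Sum>l\<le>m. C l * integral {0..2*pi} (\<lambda>t. cis (of_int (int l - N) * t) / qC C m (cis t)))
     = (if N = 0 then 2*pi else 0)"
proof -
  have nz1: "qC C m (cis t) \<noteq> 0" for t using nz by simp
  have "(\<Sum>l\<le>m. C l * integral {0..2*pi} (\<lambda>t. cis (of_int (int l - N) * t) / qC C m (cis t)))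
     = integral {0..2*pi} (\<lambda>t. \<Sum>l\<le>m. C l * (cis (of_int (int l - N) * t) / qC C m (cis t)))"
  proof -
    define f where "f l = (\<lambda>t. cis (of_int (int l - N) * t) / qC C m (cis t))" for l
    have fi: "f l integrable_on {0..2*pi}" for l unfolding f_def by (rule intble_I) (rule nz1)
    have "(\<Sum>l\<le>m. C l * integral {0..2*pi} (f l)) = (\<Sum>l\<le>m. integral {0..2*pi} (\<lambda>t. C l * f l t))"
      by (simp only: integral_mult_right)
    also have "\<dots> = integral {0..2*pi} (\<lambda>t. \<Sum>l\<le>m. C l * f l t)"
      using fi by (intro integral_sum[symmetric]) (auto intro!: integrable_on_mult_right)
    finally show ?thesis by (simp add: f_def)
  qed
  also have "\<dots> = integral {0..2*pi} (\<lambda>t. cis (of_int (- N) * t))"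
  proof (rule integral_cong)
    fix t :: real
    have "(\<Sum>l\<le>m. C l * (cis (of_int (int l - N) * t) / qC C m (cis t)))
       = cis (of_int (- N) * t) * (\<Sum>l\<le>m. C l * cis t ^ l) / qC C m (cis t)"
      by (simp add: sum_distrib_left sum_divide_distrib cis_pow_conv cis_mult algebra_simps)
    then show "(\<Sum>l\<le>m. C l * (cis (of_int (int l - N) * t) / qC C m (cis t))) = cis (of_int (- N) * t)"
      using nz1[of t] by (simp add: qC_def)
  qed
  also have "\<dots> = (if N = 0 then 2*pi else 0)" by (subst integral_cis_int) simp
  finally show ?thesis .
qed

lemma Gw_int:
  assumes st: "stable2 c n m" and k1: "k1 < m" and k2: "k2 < m"
  shows "integral {0..2*pi} (Gw c n m k1 k2 s) = (if k1 = k2 then 2*pi else 0)"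
proof -
  define C where "C = Cc c n (cis s)"
  have nz: "\<And>w. cmod w \<le> 1 \<Longrightarrow> qC C m w \<noteq> 0" unfolding C_def using stable_q[OF st] by blast
  have nz1: "qC C m (cis t) \<noteq> 0" for t using nz by simp
  define g where "g r = (\<lambda>t. cis (of_int r * t) / qC C m (cis t))" for r
  define J where "J r = integral {0..2*pi} (g r)" for r
  have gi: "g r integrable_on {0..2*pi}" for r unfolding g_def by (rule intble_I) (rule nz1)
  have J0: "J r = 0" if "r \<ge> 1" for r unfolding J_def g_def by (rule I_zero[OF nz that])
  have "Gw c n m k1 k2 s = (\<lambda>t. \<Sum>l\<le>k2. C l * g (int k1 + int l - int k2) t - cnj (C (m - l)) * cnj (g (int m + int k2 - int k1 - int l) t))"
    by (simp add: Gw_def g_def C_def fun_eq_iff)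
  then have "integral {0..2*pi} (Gw c n m k1 k2 s) =
     (\<Sum>l\<le>k2. integral {0..2*pi} (\<lambda>t. C l * g (int k1 + int l - int k2) t - cnj (C (m - l)) * cnj (g (int m + int k2 - int k1 - int l) t)))"
    using gi by (simp only:) (intro integral_sum, auto intro!: integrable_diff integrable_on_mult_right simp: integrable_on_cnj_iff)
  also have "\<dots> = (\<Sum>l\<le>k2. C l * J (int k1 + int l - int k2) - cnj (C (m - l)) * cnj (J (int m + int k2 - int k1 - int l)))"
  proof (rule sum.cong[OF refl])
    fix l assume "l \<in> {..k2}"
    show "integral {0..2*pi} (\<lambda>t. C l * g (int k1 + int l - int k2) t - cnj (C (m - l)) * cnj (g (int m + int k2 - int k1 - int l) t))
       = C l * J (int k1 + int l - int k2) - cnj (C (m - l)) * cnj (J (int m + int k2 - int k1 - int l))"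
      using gi by (subst integral_diff) (auto intro!: integrable_on_mult_right simp: integrable_on_cnj_iff integral_cnj J_def)
  qed
  also have "\<dots> = (\<Sum>l\<le>k2. C l * J (int l - (int k2 - int k1)))"
  proof (rule sum.cong[OF refl])
    fix l assume "l \<in> {..k2}"
    then have "J (int m + int k2 - int k1 - int l) = 0" using k1 by (intro J0) auto
    moreover have "J (int k1 + int l - int k2) = J (int l - (int k2 - int k1))" by (rule arg_cong[where f=J]) simp
    ultimately show "C l * J (int k1 + int l - int k2) - cnj (C (m - l)) * cnj (J (int m + int k2 - int k1 - int l))
      = C l * J (int l - (int k2 - int k1))" by simp
  qed
  also have "\<dots> = (\<Sum>l\<le>m. C l * J (int l - (int k2 - int k1)))"
    using k2 by (intro sum.mono_neutral_left) (auto intro!: J0)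
  also have "\<dots> = (if int k2 - int k1 = 0 then 2*pi else 0)"
    unfolding J_def g_def by (rule key_sum[OF nz])
  finally show ?thesis by auto
qed



lemma T2_cbox: "T2 = cbox (0, 0) (2*pi, 2*pi)"
  unfolding T2_def cbox_Pair_eq by (simp only: cbox_interval)

lemma set_integrable_T2:
  fixes G :: "real \<times> real \<Rightarrow> complex"
  assumes "continuous_on T2 G"
  shows "set_integrable lborel T2 G"
  unfolding set_integrable_def
  by (rule borel_integrable_compact) (use assms in \<open>auto simp: T2_cbox\<close>)

lemma LINT_T2:
  fixes G :: "real \<times> real \<Rightarrow> complex"
  assumes "continuous_on T2 G"
  shows "(LINT x:T2|lborel. G x) = integral {0..2*pi} (\<lambda>s. integral {0..2*pi} (\<lambda>t. G (s,t)))"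
proof -
  have "(LINT x:T2|lborel. G x) = integral T2 G"
    by (rule set_borel_integral_eq_integral(2)[OF set_integrable_T2[OF assms]])
  also have "\<dots> = integral (cbox 0 (2*pi)) (\<lambda>s. integral (cbox 0 (2*pi)) (\<lambda>t. G (s,t)))"
    unfolding T2_cbox by (rule integral_prod_continuous) (use assms in \<open>simp add: T2_cbox\<close>)
  finally show ?thesis by (simp add: cbox_interval)
qed

lemma cont_Cc: "continuous_on S (\<lambda>x. Cc c n (cis (f x)) l)" if "continuous_on S f"
  unfolding Cc_def by (intro continuous_intros that)

lemma cont_qCc: "continuous_on S (\<lambda>x. qC (Cc c n (cis (f x))) m (cis (g x)))"
  if "continuous_on S f" "continuous_on S g"
  unfolding qC_def by (intro continuous_intros cont_Cc that)

lemma cont_Gw: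
  assumes st: "stable2 c n m"
  shows "continuous_on S (\<lambda>x. Gw c n m k1 k2 (fst x) (snd x))"
  unfolding Gw_def
  by (intro continuous_intros cont_Cc cont_qCc) (auto simp: stable_q[OF st])

lemma ipw_mono:
  fixes c :: "nat \<Rightarrow> nat \<Rightarrow> complex" and a :: "nat \<Rightarrow> complex \<Rightarrow> complex \<Rightarrow> complex"
  assumes a_def: "\<forall>z w \<eta>. z \<noteq> 0 \<longrightarrow>
        (1 - w * cnj \<eta>) * (\<Sum>j<m. a j z w * cnj \<eta> ^ j) =
        z ^ n * (poly2 c n m z w * cnj (poly2 c n m (1 / cnj z) \<eta>)
                 - refl2 c n m z w * cnj (refl2 c n m (1 / cnj z) \<eta>))"
  and st: "stable2 c n m" and k1: "k1 < m" and k2: "k2 < m"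
  shows "ipw (poly2 c n m) (\<lambda>z w. z powi (j1 + int n) * w ^ k1) (\<lambda>z w. z powi j2 * a k2 z w)
     = (if j1 = j2 \<and> k1 = k2 then 1 else 0)"
proof -
  define G where "G x = cis (of_int (j1 - j2) * fst x) * Gw c n m k1 k2 (fst x) (snd x)" for x
  have eq: "(\<lambda>x. tor (\<lambda>z w. z powi (j1 + int n) * w ^ k1) x * cnj (tor (\<lambda>z w. z powi j2 * a k2 z w) x)
      / complex_of_real ((cmod (tor (poly2 c n m) x))\<^sup>2)) = G"
    unfolding G_def by (rule ext, rule pointwise[OF a_def st k2])
  have cG: "continuous_on T2 G" unfolding G_def
    by (intro continuous_intros cont_Gw[OF st])
  have "(LINT x:T2|lborel. G x) = integral {0..2*pi} (\<lambda>s. integral {0..2*pi} (\<lambda>t. G (s,t)))"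
    by (rule LINT_T2[OF cG])
  also have "\<dots> = integral {0..2*pi} (\<lambda>s. (if k1 = k2 then 2*pi else 0) * cis (of_int (j1 - j2) * s))"
    by (rule integral_cong) (simp only: G_def fst_conv snd_conv integral_mult_right Gw_int[OF st k1 k2], simp add: mult.commute)
  also have "\<dots> = (if k1 = k2 then 2*pi else 0) * (if j1 - j2 = 0 then 2*pi else 0)"
    by (simp only: integral_mult_right integral_cis_int of_real_mult)
  finally have "(LINT x:T2|lborel. G x) = (if j1 = j2 \<and> k1 = k2 then 4 * pi^2 else 0)"
    by (simp add: power2_eq_square)
  then show ?thesis unfolding ipw_def eq
    by simp
qed



definition L2 :: "(real \<times> real \<Rightarrow> complex) \<Rightarrow> bool" where
  "L2 u \<longleftrightarrow> u \<in> borel_measurable lborel \<and> set_integrable lborel T2 (\<lambda>x. (cmod (u x))\<^sup>2)"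

lemma T2_sets[measurable]: "T2 \<in> sets lborel"
  unfolding T2_def by (simp add: borel_closed closed_Times)

lemma cont_meas: "continuous_on UNIV B \<Longrightarrow> B \<in> borel_measurable lborel"
  using borel_measurable_continuous_onI by (simp add: measurable_lborel1)

lemma set_integrable_T2':
  fixes G :: "real \<times> real \<Rightarrow> 'b::{banach, second_countable_topology}"
  assumes "continuous_on T2 G"
  shows "set_integrable lborel T2 G"
  unfolding set_integrable_def
  by (rule borel_integrable_compact) (use assms in \<open>auto simp: T2_cbox\<close>)

lemma bounded_T2:
  fixes B :: "real \<times> real \<Rightarrow> 'b::real_normed_vector"
  assumes "continuous_on T2 B"
  obtains K where "K > 0" "\<And>x. x \<in> T2 \<Longrightarrow> norm (B x) \<le> K"
proof -
  have "compact (B ` T2)" by (rule compact_continuous_image[OF assms]) (simp add: T2_cbox)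
  then have "bounded (B ` T2)" by (rule compact_imp_bounded)
  then show ?thesis using that by (auto simp: bounded_pos)
qed

lemma le_sq1: "(a::real) \<ge> 0 \<Longrightarrow> a \<le> 1 + a^2"
proof -
  have "(a - 1/2)^2 = a^2 - a + 1/4" by (simp add: power2_eq_square algebra_simps)
  then show ?thesis using zero_le_power2[of "a - 1/2"] by linarith
qed

lemma L2_mult:
  assumes u: "L2 u" and B: "continuous_on UNIV B"
  shows "set_integrable lborel T2 (\<lambda>x. u x * B x)"
proof -
  obtain K where K: "K > 0" "\<And>x. x \<in> T2 \<Longrightarrow> cmod (B x) \<le> K"
    using bounded_T2[of B] B continuous_on_subset by blast
  have um: "u \<in> borel_measurable lborel" and ui: "set_integrable lborel T2 (\<lambda>x. (cmod (u x))\<^sup>2)"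
    using u by (auto simp: L2_def)
  have Bm: "B \<in> borel_measurable lborel" by (rule cont_meas[OF B])
  have "set_integrable lborel T2 (\<lambda>x. K * 1 + K * (cmod (u x))\<^sup>2)"
    by (intro set_integral_add(1) set_integrable_mult_right ui set_integrable_T2') simp
  then show ?thesis
  proof (rule set_integrable_bound)
    show "set_borel_measurable lborel T2 (\<lambda>x. u x * B x)"
      unfolding set_borel_measurable_def using um Bm by measurable
    show "AE x in lborel. x \<in> T2 \<longrightarrow> cmod (u x * B x) \<le> norm (K * 1 + K * (cmod (u x))\<^sup>2)"
    proof (intro AE_I2 impI)
      fix x assume x: "x \<in> T2"
      have "cmod (u x * B x) \<le> cmod (u x) * K"
        unfolding norm_mult by (rule mult_left_mono[OF K(2)[OF x]]) simp
      also have "\<dots> \<le> (1 + (cmod (u x))\<^sup>2) * K"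
        by (rule mult_right_mono[OF le_sq1]) (use K in auto)
      also have "\<dots> = norm (K * 1 + K * (cmod (u x))\<^sup>2)"
        using K by (simp add: algebra_simps)
      finally show "cmod (u x * B x) \<le> norm (K * 1 + K * (cmod (u x))\<^sup>2)" .
    qed
  qed
qed

lemma L2_sqmult:
  fixes R :: "real \<times> real \<Rightarrow> real"
  assumes u: "L2 u" and B: "continuous_on UNIV R"
  shows "set_integrable lborel T2 (\<lambda>x. (cmod (u x))\<^sup>2 * R x)"
proof -
  obtain K where K: "K > 0" "\<And>x. x \<in> T2 \<Longrightarrow> norm (R x) \<le> K"
    using bounded_T2[of R] B continuous_on_subset by blast
  have um: "u \<in> borel_measurable lborel" and ui: "set_integrable lborel T2 (\<lambda>x. (cmod (u x))\<^sup>2)"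
    using u by (auto simp: L2_def)
  have Bm: "R \<in> borel_measurable lborel" by (rule cont_meas[OF B])
  have "set_integrable lborel T2 (\<lambda>x. K * (cmod (u x))\<^sup>2)"
    by (intro set_integrable_mult_right ui)
  then show ?thesis
  proof (rule set_integrable_bound)
    show "set_borel_measurable lborel T2 (\<lambda>x. (cmod (u x))\<^sup>2 * R x)"
      unfolding set_borel_measurable_def using um Bm by measurable
    show "AE x in lborel. x \<in> T2 \<longrightarrow> norm ((cmod (u x))\<^sup>2 * R x) \<le> norm (K * (cmod (u x))\<^sup>2)"
    proof (intro AE_I2 impI)
      fix x assume x: "x \<in> T2"
      show "norm ((cmod (u x))\<^sup>2 * R x) \<le> norm (K * (cmod (u x))\<^sup>2)"
        using mult_left_mono[OF K(2)[OF x], of "(cmod (u x))\<^sup>2"] K by (simp add: abs_mult mult.commute)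
    qed
  qed
qed

lemma L2_diff:
  assumes u: "L2 u" and v: "L2 v"
  shows "L2 (\<lambda>x. u x - v x)"
proof -
  have um: "u \<in> borel_measurable lborel" and ui: "set_integrable lborel T2 (\<lambda>x. (cmod (u x))\<^sup>2)"
    using u by (auto simp: L2_def)
  have vm: "v \<in> borel_measurable lborel" and vi: "set_integrable lborel T2 (\<lambda>x. (cmod (v x))\<^sup>2)"
    using v by (auto simp: L2_def)
  have m: "(\<lambda>x. u x - v x) \<in> borel_measurable lborel" using um vm by measurable
  have "set_integrable lborel T2 (\<lambda>x. 2 * (cmod (u x))\<^sup>2 + 2 * (cmod (v x))\<^sup>2)"
    by (intro set_integral_add(1) set_integrable_mult_right ui vi)
  then have "set_integrable lborel T2 (\<lambda>x. (cmod (u x - v x))\<^sup>2)"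
  proof (rule set_integrable_bound)
    show "set_borel_measurable lborel T2 (\<lambda>x. (cmod (u x - v x))\<^sup>2)"
      unfolding set_borel_measurable_def using m by measurable
    show "AE x in lborel. x \<in> T2 \<longrightarrow> norm ((cmod (u x - v x))\<^sup>2) \<le> norm (2 * (cmod (u x))\<^sup>2 + 2 * (cmod (v x))\<^sup>2)"
    proof (intro AE_I2 impI)
      fix x
      have t: "cmod (u x - v x) \<le> cmod (u x) + cmod (v x)" by (rule norm_triangle_ineq4)
      have "(cmod (u x - v x))\<^sup>2 \<le> (cmod (u x) + cmod (v x))\<^sup>2"
        by (rule power_mono[OF t]) simp
      also have "\<dots> \<le> 2 * (cmod (u x))\<^sup>2 + 2 * (cmod (v x))\<^sup>2"
        using zero_le_power2[of "cmod (u x) - cmod (v x)"] unfolding power2_sum power2_diff by linarith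
      finally show "norm ((cmod (u x - v x))\<^sup>2) \<le> norm (2 * (cmod (u x))\<^sup>2 + 2 * (cmod (v x))\<^sup>2)" by simp
    qed
  qed
  then show ?thesis using m by (simp add: L2_def)
qed

lemma L2_cont: "continuous_on UNIV v \<Longrightarrow> L2 v"
proof -
  assume c: "continuous_on UNIV v"
  have "set_integrable lborel T2 (\<lambda>x. (cmod (v x))\<^sup>2)"
    by (rule set_integrable_T2', intro continuous_intros continuous_on_subset[OF c]) simp
  then show ?thesis using cont_meas[OF c] by (simp add: L2_def)
qed

lemma amgm_eps: "(a::real) \<ge> 0 \<Longrightarrow> e > 0 \<Longrightarrow> a \<le> a^2 / (2*e) + e / 2"
proof -
  assume a: "a \<ge> 0" and e: "e > 0"
  have "0 \<le> (a - e)^2 / (2*e)" using e by simp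
  also have "(a - e)^2 / (2*e) = a^2 / (2*e) + e/2 - a"
    using e by (simp add: power2_eq_square field_simps)
  finally show ?thesis by simp
qed

lemma small_bound:
  fixes B :: "real \<times> real \<Rightarrow> complex" and P :: "real \<times> real \<Rightarrow> real"
  assumes B: "continuous_on UNIV B" and P: "continuous_on UNIV P" and Ppos: "\<And>x. P x > 0"
  shows "\<exists>C1 C2. C1 \<ge> 0 \<and> (\<forall>h e. L2 h \<longrightarrow> e > 0 \<longrightarrow>
     norm (LINT x:T2|lborel. h x * B x) \<le> C1 * (LINT x:T2|lborel. (cmod (h x))\<^sup>2 / P x) / e + C2 * e)"
proof -
  obtain K where K: "K > 0" "\<And>x. x \<in> T2 \<Longrightarrow> cmod (B x) \<le> K"
    using bounded_T2[of B] B continuous_on_subset by blast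
  obtain Mp where Mp: "Mp > 0" "\<And>x. x \<in> T2 \<Longrightarrow> norm (P x) \<le> Mp"
    using bounded_T2[of P] P continuous_on_subset by blast
  have Pnz: "P x \<noteq> 0" for x using Ppos[of x] by simp
  have cinv: "continuous_on UNIV (\<lambda>x. 1 / P x)"
    by (intro continuous_intros P) (simp add: Pnz)
  define C2 where "C2 = (LINT x:T2|lborel. K / 2)"
  show ?thesis
  proof (intro exI conjI allI impI)
    show "K * Mp / 2 \<ge> 0" using K Mp by simp
  next
    fix h e assume h: "L2 h" and e: "(e::real) > 0"
    have i1: "set_integrable lborel T2 (\<lambda>x. h x * B x)" by (rule L2_mult[OF h B])
    have i2: "set_integrable lborel T2 (\<lambda>x. (cmod (h x))\<^sup>2 / P x)"
      using L2_sqmult[OF h cinv] by simp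
    have i3: "set_integrable lborel T2 (\<lambda>x. K * Mp / (2*e) * ((cmod (h x))\<^sup>2 / P x) + e * (K / 2))"
      by (intro set_integral_add(1) set_integrable_mult_right i2 set_integrable_T2') simp
    have "norm (LINT x:T2|lborel. h x * B x) \<le> (LINT x:T2|lborel. norm (h x * B x))"
      by (rule set_integral_norm_bound[OF i1])
    also have "\<dots> \<le> (LINT x:T2|lborel. K * Mp / (2*e) * ((cmod (h x))\<^sup>2 / P x) + e * (K / 2))"
    proof (rule set_integral_mono[OF set_integrable_norm[OF i1] i3])
      fix x assume x: "x \<in> T2"
      have Px: "P x \<le> Mp" using Mp(2)[OF x] by simp
      have "norm (h x * B x) \<le> cmod (h x) * K"
        unfolding norm_mult by (rule mult_left_mono[OF K(2)[OF x]]) simp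
      also have "\<dots> \<le> ((cmod (h x))\<^sup>2 / (2*e) + e / 2) * K"
        by (rule mult_right_mono[OF amgm_eps[OF _ e]]) (use K in auto)
      also have "(cmod (h x))\<^sup>2 / (2*e) \<le> Mp / (2*e) * ((cmod (h x))\<^sup>2 / P x)"
      proof -
        have "(cmod (h x))\<^sup>2 * 1 \<le> (cmod (h x))\<^sup>2 * (Mp / P x)"
          by (rule mult_left_mono) (use Px Ppos[of x] in auto)
        then show ?thesis using e Ppos[of x] by (simp add: field_simps)
      qed
      then have "((cmod (h x))\<^sup>2 / (2*e) + e / 2) * K \<le> (Mp / (2*e) * ((cmod (h x))\<^sup>2 / P x) + e/2) * K"
        using K by (intro mult_right_mono) auto
      also have "\<dots> = K * Mp / (2*e) * ((cmod (h x))\<^sup>2 / P x) + e * (K / 2)"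
        by (simp add: algebra_simps)
      finally show "norm (h x * B x) \<le> K * Mp / (2*e) * ((cmod (h x))\<^sup>2 / P x) + e * (K / 2)" .
    qed
    also have "\<dots> = K * Mp / 2 * (LINT x:T2|lborel. (cmod (h x))\<^sup>2 / P x) / e + C2 * e"
    proof -
      have A1: "set_integrable lborel T2 (\<lambda>x. K*Mp/(2*e) * ((cmod (h x))\<^sup>2 / P x))"
        by (rule set_integrable_mult_right[OF i2])
      have A2: "set_integrable lborel T2 (\<lambda>x. e * (K/2))" by (rule set_integrable_T2') simp
      have "(LINT x:T2|lborel. K * Mp / (2*e) * ((cmod (h x))\<^sup>2 / P x) + e * (K / 2))
          = (LINT x:T2|lborel. K * Mp / (2*e) * ((cmod (h x))\<^sup>2 / P x)) + (LINT x:T2|lborel. e * (K / 2))"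
        by (rule set_integral_add(2)[OF A1 A2])
      also have "\<dots> = K * Mp / (2*e) * (LINT x:T2|lborel. (cmod (h x))\<^sup>2 / P x) + e * C2"
        unfolding C2_def by (simp only: set_integral_mult_right)
      finally show ?thesis using e by (simp add: field_simps)
    qed
    finally show "norm (LINT x:T2|lborel. h x * B x) \<le> K * Mp / 2 * (LINT x:T2|lborel. (cmod (h x))\<^sup>2 / P x) / e + C2 * e" .
  qed
qed



lemma cont_Qt: "continuous_on S (\<lambda>x. Qt (Cc c n (cis (f x))) m (cis (g x)))"
  if "continuous_on S f" "continuous_on S g"
  unfolding Qt_def by (intro continuous_intros cont_Cc that)

lemma cont_Ee: "continuous_on S (\<lambda>x. Ee c n m (cis (f x)) (cis (g x)) l)"
  if "continuous_on S f" "continuous_on S g"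
  unfolding Ee_def by (intro continuous_intros cont_Cc cont_Qt cont_qCc that)

lemma cont_poly2: "continuous_on S (\<lambda>x. poly2 c n m (cis (f x)) (cis (g x)))"
  if "continuous_on S f" "continuous_on S g"
  unfolding poly2_def by (intro continuous_intros that)

lemma poly2_nz: "stable2 c n m \<Longrightarrow> poly2 c n m (cis s) (cis t) \<noteq> 0"
  unfolding stable2_def by simp

lemma B1_eq:
  fixes c :: "nat \<Rightarrow> nat \<Rightarrow> complex" and a :: "nat \<Rightarrow> complex \<Rightarrow> complex \<Rightarrow> complex"
  assumes a_def: "\<forall>z w \<eta>. z \<noteq> 0 \<longrightarrow>
        (1 - w * cnj \<eta>) * (\<Sum>j<m. a j z w * cnj \<eta> ^ j) =
        z ^ n * (poly2 c n m z w * cnj (poly2 c n m (1 / cnj z) \<eta>)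
                 - refl2 c n m z w * cnj (refl2 c n m (1 / cnj z) \<eta>))"
  and k: "k < m"
  shows "tor (\<lambda>z w. z powi j * a k z w) x = cis (fst x) powi j * (cis (fst x) ^ n *
      (\<Sum>l\<le>k. cis (snd x) ^ (k-l) * Ee c n m (cis (fst x)) (cis (snd x)) l))"
  unfolding tor_def by (subst a_formula[OF a_def _ k]) simp_all

lemma cont_B1:
  assumes st: "stable2 c n m"
  shows "continuous_on UNIV (\<lambda>x. cnj (cis (fst x) powi j * (cis (fst x) ^ n *
      (\<Sum>l\<le>k. cis (snd x) ^ (k-l) * Ee c n m (cis (fst x)) (cis (snd x)) l)))
      / complex_of_real ((cmod (poly2 c n m (cis (fst x)) (cis (snd x))))\<^sup>2))"
  by (intro continuous_intros cont_Ee cont_poly2) (auto simp: poly2_nz[OF st])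

definition B1f :: "(nat \<Rightarrow> nat \<Rightarrow> complex) \<Rightarrow> nat \<Rightarrow> nat \<Rightarrow> int \<Rightarrow> nat \<Rightarrow> real \<times> real \<Rightarrow> complex" where
  "B1f c n m j k x = cnj (cis (fst x) powi j * (cis (fst x) ^ n *
      (\<Sum>l\<le>k. cis (snd x) ^ (k-l) * Ee c n m (cis (fst x)) (cis (snd x)) l)))
      / complex_of_real ((cmod (poly2 c n m (cis (fst x)) (cis (snd x))))\<^sup>2)"

definition B2f :: "nat \<Rightarrow> int \<Rightarrow> nat \<Rightarrow> real \<times> real \<Rightarrow> complex" where
  "B2f n j k x = cis (-(of_int (j + int n) * fst x)) * cis (-(of_int (int k) * snd x))"

lemma tor_mono: "tor (\<lambda>z w. z powi j' * w ^ k') x = cis (of_int j' * fst x) * cis (of_nat k' * snd x)"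
  by (simp add: tor_def cis_power_int cis_pow_conv)

lemma cont_mono: "continuous_on UNIV (tor (\<lambda>z w. z powi j' * w ^ k'))"
  unfolding tor_mono[abs_def] by (intro continuous_intros)

lemma cont_B2: "continuous_on UNIV (B2f n j k)"
  unfolding B2f_def[abs_def] by (intro continuous_intros)

lemma mono_B2:
  "(LINT x:T2|lborel. tor (\<lambda>z w. z powi j' * w ^ k') x * B2f n j k x)
     = (if j' = j + int n \<and> k' = k then 4*pi^2 else 0)"
proof -
  define G where "G x = tor (\<lambda>z w. z powi j' * w ^ k') x * B2f n j k x" for x
  have cG: "continuous_on T2 G" unfolding G_def
    by (intro continuous_intros continuous_on_subset[OF cont_mono] continuous_on_subset[OF cont_B2]) auto
  have pt: "G (s,t) = cis (of_int (j' - (j + int n)) * s) * cis (of_int (int k' - int k) * t)" for s t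
    by (simp add: G_def tor_mono B2f_def cis_mult algebra_simps)
  have "(LINT x:T2|lborel. G x) = integral {0..2*pi} (\<lambda>s. integral {0..2*pi} (\<lambda>t. G (s,t)))"
    by (rule LINT_T2[OF cG])
  also have "\<dots> = integral {0..2*pi} (\<lambda>s. cis (of_int (j' - (j + int n)) * s) * (if int k' - int k = 0 then 2*pi else 0))"
    by (rule integral_cong) (simp only: pt integral_mult_right integral_cis_int)
  also have "\<dots> = (if j' - (j + int n) = 0 then 2*pi else 0) * (if int k' - int k = 0 then 2*pi else 0)"
    by (simp only: integral_mult_left integral_cis_int of_real_mult)
  finally show ?thesis by (simp add: G_def power2_eq_square)
qed

lemma mono_B1:
  fixes c :: "nat \<Rightarrow> nat \<Rightarrow> complex" and a :: "nat \<Rightarrow> complex \<Rightarrow> complex \<Rightarrow> complex"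
  assumes a_def: "\<forall>z w \<eta>. z \<noteq> 0 \<longrightarrow>
        (1 - w * cnj \<eta>) * (\<Sum>j<m. a j z w * cnj \<eta> ^ j) =
        z ^ n * (poly2 c n m z w * cnj (poly2 c n m (1 / cnj z) \<eta>)
                 - refl2 c n m z w * cnj (refl2 c n m (1 / cnj z) \<eta>))"
  and st: "stable2 c n m" and k: "k < m" and k': "k' < m"
  shows "(LINT x:T2|lborel. tor (\<lambda>z w. z powi j' * w ^ k') x * B1f c n m j k x)
     = (if j' = j + int n \<and> k' = k then 4*pi^2 else 0)"
proof -
  have "ipw (poly2 c n m) (\<lambda>z w. z powi (j' - int n + int n) * w ^ k') (\<lambda>z w. z powi j * a k z w)
     = (if j' - int n = j \<and> k' = k then 1 else 0)"
    by (rule ipw_mono[OF a_def st k' k])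
  moreover have "(\<lambda>x. tor (\<lambda>z w. z powi j' * w ^ k') x * cnj (tor (\<lambda>z w. z powi j * a k z w) x)
      / complex_of_real ((cmod (tor (poly2 c n m) x))\<^sup>2)) = (\<lambda>x. tor (\<lambda>z w. z powi j' * w ^ k') x * B1f c n m j k x)"
    by (rule ext) (simp add: B1f_def B1_eq[OF a_def k] tor_def[of "poly2 c n m"])
  ultimately have "complex_of_real (1 / (4 * pi ^ 2)) * (LINT x:T2|lborel. tor (\<lambda>z w. z powi j' * w ^ k') x * B1f c n m j k x)
     = (if j' - int n = j \<and> k' = k then 1 else 0)"
    by (simp add: ipw_def)
  then show ?thesis by (auto simp: field_simps split: if_splits)
qed

lemma cont_Bf: "stable2 c n m \<Longrightarrow> continuous_on UNIV (\<lambda>x. B1f c n m j k x - B2f n j k x)"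
  unfolding B1f_def[abs_def] by (intro continuous_intros cont_B1 cont_B2)

lemma LINT_HK:
  fixes G :: "real \<times> real \<Rightarrow> complex"
  assumes "continuous_on T2 G"
  shows "(LINT x:T2|lborel. G x) = integral T2 G"
  by (rule set_borel_integral_eq_integral(2)[OF set_integrable_T2'[OF assms]])

lemma trig_zero:
  fixes c :: "nat \<Rightarrow> nat \<Rightarrow> complex" and a :: "nat \<Rightarrow> complex \<Rightarrow> complex \<Rightarrow> complex"
  assumes a_def: "\<forall>z w \<eta>. z \<noteq> 0 \<longrightarrow>
        (1 - w * cnj \<eta>) * (\<Sum>j<m. a j z w * cnj \<eta> ^ j) =
        z ^ n * (poly2 c n m z w * cnj (poly2 c n m (1 / cnj z) \<eta>)
                 - refl2 c n m z w * cnj (refl2 c n m (1 / cnj z) \<eta>))"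
  and st: "stable2 c n m" and k: "k < m" and F: "finite F" "F \<subseteq> UNIV \<times> {..<m}"
  shows "(LINT x:T2|lborel. tor (trig F d) x * (B1f c n m j k x - B2f n j k x)) = 0"
proof -
  define B where "B x = B1f c n m j k x - B2f n j k x" for x
  have cB: "continuous_on UNIV B" unfolding B_def[abs_def] by (rule cont_Bf[OF st])
  define M where "M jk = tor (\<lambda>z w. z powi fst jk * w ^ snd jk)" for jk
  have cM: "continuous_on T2 (\<lambda>x. M jk x * B x)" for jk unfolding M_def
    by (intro continuous_intros continuous_on_subset[OF cont_mono] continuous_on_subset[OF cB]) auto
  have M0: "integral T2 (\<lambda>x. M jk x * B x) = 0" if "jk \<in> F" for jk
  proof -
    have km: "snd jk < m" using that F by auto
    have "integral T2 (\<lambda>x. M jk x * B x) = (LINT x:T2|lborel. M jk x * B x)"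
      by (rule LINT_HK[OF cM, symmetric])
    also have "\<dots> = (LINT x:T2|lborel. M jk x * B1f c n m j k x) - (LINT x:T2|lborel. M jk x * B2f n j k x)"
      unfolding B_def right_diff_distrib M_def
      by (rule set_integral_diff(2); rule set_integrable_T2';
          intro continuous_intros continuous_on_subset[OF cont_mono] continuous_on_subset[OF cont_B2]
             continuous_on_subset[OF cont_B1[OF st], unfolded B1f_def[symmetric]]; simp)
    also have "\<dots> = 0"
      unfolding M_def using mono_B1[OF a_def st k km] mono_B2 by simp
    finally show ?thesis .
  qed
  have tt: "tor (trig F d) x * B x = (\<Sum>jk\<in>F. d jk * (M jk x * B x))" for x
    by (simp add: tor_def trig_def M_def sum_distrib_right mult.assoc)
  have "(LINT x:T2|lborel. tor (trig F d) x * B x) = integral T2 (\<lambda>x. tor (trig F d) x * B x)"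
  proof (rule LINT_HK)
    have "continuous_on T2 (\<lambda>x. \<Sum>jk\<in>F. d jk * (M jk x * B x))"
      by (intro continuous_intros cM)
    then show "continuous_on T2 (\<lambda>x. tor (trig F d) x * B x)" by (simp only: tt)
  qed
  also have "\<dots> = integral T2 (\<lambda>x. \<Sum>jk\<in>F. d jk * (M jk x * B x))" by (simp only: tt)
  also have "\<dots> = (\<Sum>jk\<in>F. integral T2 (\<lambda>x. d jk * (M jk x * B x)))"
  proof (rule integral_sum[OF F(1)])
    fix jk
    have "(\<lambda>x. M jk x * B x) integrable_on T2"
      using integrable_continuous[of "(0,0)" "(2*pi,2*pi)" "\<lambda>x. M jk x * B x"] cM[of jk] by (simp add: T2_cbox)
    then show "(\<lambda>x. d jk * (M jk x * B x)) integrable_on T2" by (rule integrable_on_mult_right)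
  qed
  also have "\<dots> = 0" by (simp add: M0)
  finally show ?thesis by (simp add: B_def)
qed

lemma eps_zero: "(\<And>e. e > 0 \<Longrightarrow> (x::real) \<le> A * e) \<Longrightarrow> x \<le> 0"
proof (rule ccontr)
  assume h: "\<And>e. e > 0 \<Longrightarrow> x \<le> A * e" and "\<not> x \<le> 0"
  then have x: "x > 0" by simp
  show False
  proof (cases "A \<le> 0")
    case True then show False using h[of 1] x by simp
  next
    case False
    then have "x \<le> A * (x / (2*A))" using h[of "x / (2*A)"] x by simp
    also have "\<dots> = x / 2" using False by simp
    finally show False using x by simp
  qed
qed

lemma cont_tor_trig: "continuous_on UNIV (tor (trig F d))"
  unfolding tor_def[abs_def] trig_def by (intro continuous_intros) auto

lemma part3:
  fixes c :: "nat \<Rightarrow> nat \<Rightarrow> complex" and a :: "nat \<Rightarrow> complex \<Rightarrow> complex \<Rightarrow> complex"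
  assumes a_def: "\<forall>z w \<eta>. z \<noteq> 0 \<longrightarrow>
        (1 - w * cnj \<eta>) * (\<Sum>j<m. a j z w * cnj \<eta> ^ j) =
        z ^ n * (poly2 c n m z w * cnj (poly2 c n m (1 / cnj z) \<eta>)
                 - refl2 c n m z w * cnj (refl2 c n m (1 / cnj z) \<eta>))"
  and st: "stable2 c n m" and k: "k < m" and fS: "inS (poly2 c n m) m f"
  shows "ipw (poly2 c n m) f (\<lambda>z w. z powi j * a k z w) - fourier2 f (j + int n) (int k) = 0"
proof -
  define B where "B x = B1f c n m j k x - B2f n j k x" for x
  have cB: "continuous_on UNIV B" unfolding B_def[abs_def] by (rule cont_Bf[OF st])
  have cB1: "continuous_on UNIV (B1f c n m j k)" unfolding B1f_def[abs_def] by (rule cont_B1[OF st])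
  define P where "P x = (cmod (tor (poly2 c n m) x))\<^sup>2" for x
  have cP: "continuous_on UNIV P" unfolding P_def[abs_def] tor_def
    by (intro continuous_intros cont_poly2)
  have Ppos: "P x > 0" for x unfolding P_def tor_def using poly2_nz[OF st] by simp
  define u where "u = tor f"
  have uL2: "L2 u" using fS by (simp add: inS_def L2T_def L2_def u_def)
  define Lam where "Lam v = (LINT x:T2|lborel. v x * B x)" for v
  have i1: "set_integrable lborel T2 (\<lambda>x. u x * B1f c n m j k x)" by (rule L2_mult[OF uL2 cB1])
  have i2: "set_integrable lborel T2 (\<lambda>x. u x * B2f n j k x)" by (rule L2_mult[OF uL2 cont_B2])
  have "ipw (poly2 c n m) f (\<lambda>z w. z powi j * a k z w) = complex_of_real (1 / (4 * pi ^ 2)) * (LINT x:T2|lborel. u x * B1f c n m j k x)"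
  proof -
    have "(\<lambda>x. tor f x * cnj (tor (\<lambda>z w. z powi j * a k z w) x) / complex_of_real ((cmod (tor (poly2 c n m) x))\<^sup>2))
      = (\<lambda>x. u x * B1f c n m j k x)"
      by (rule ext) (simp add: u_def B1f_def B1_eq[OF a_def k] tor_def[of "poly2 c n m"])
    then show ?thesis by (simp add: ipw_def)
  qed
  moreover have "fourier2 f (j + int n) (int k) = complex_of_real (1 / (4 * pi ^ 2)) * (LINT x:T2|lborel. u x * B2f n j k x)"
    unfolding fourier2_def B2f_def u_def by (simp add: mult.assoc)
  ultimately have diff: "ipw (poly2 c n m) f (\<lambda>z w. z powi j * a k z w) - fourier2 f (j + int n) (int k)
     = complex_of_real (1 / (4 * pi ^ 2)) * Lam u"
    unfolding Lam_def B_def right_diff_distrib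
    by (simp add: set_integral_diff(2)[OF i1 i2] right_diff_distrib)
  obtain C1 C2 where C1: "C1 \<ge> 0" and Cb: "\<And>h e. L2 h \<Longrightarrow> e > 0 \<Longrightarrow>
     norm (LINT x:T2|lborel. h x * B x) \<le> C1 * (LINT x:T2|lborel. (cmod (h x))\<^sup>2 / P x) / e + C2 * e"
    using small_bound[OF cB cP Ppos] by blast
  have "norm (Lam u) \<le> (4*pi^2*C1 + C2) * e" if e: "e > 0" for e
  proof -
    have "e^2 > 0" using e by simp
    then obtain F d where F: "finite F" "F \<subseteq> UNIV \<times> {..<m}"
      and nw: "normw2 (poly2 c n m) (\<lambda>z w. f z w - trig F d z w) < e^2"
      using fS unfolding inS_def by blast
    define h where "h x = u x - tor (trig F d) x" for x
    have hL2: "L2 h" unfolding h_def[abs_def] by (rule L2_diff[OF uL2 L2_cont[OF cont_tor_trig]])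
    have tL2: "L2 (tor (trig F d))" by (rule L2_cont[OF cont_tor_trig])
    have "Lam u = Lam (tor (trig F d)) + Lam h"
    proof -
      have "(\<lambda>x. u x * B x) = (\<lambda>x. tor (trig F d) x * B x + h x * B x)"
        by (rule ext) (simp add: h_def algebra_simps)
      then show ?thesis unfolding Lam_def
        by (simp add: set_integral_add(2)[OF L2_mult[OF tL2 cB] L2_mult[OF hL2 cB]])
    qed
    also have "Lam (tor (trig F d)) = 0" unfolding Lam_def B_def by (rule trig_zero[OF a_def st k F])
    finally have Lu: "Lam u = Lam h" by simp
    have Lh: "(LINT x:T2|lborel. (cmod (h x))\<^sup>2 / P x) < 4*pi^2 * e^2"
    proof -
      have "normw2 (poly2 c n m) (\<lambda>z w. f z w - trig F d z w) = (1 / (4 * pi ^ 2)) * (LINT x:T2|lborel. (cmod (h x))\<^sup>2 / P x)"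
        unfolding normw2_def h_def P_def u_def by (simp add: tor_def)
      then have "(LINT x:T2|lborel. (cmod (h x))\<^sup>2 / P x) = 4*pi^2 * normw2 (poly2 c n m) (\<lambda>z w. f z w - trig F d z w)"
        by (simp add: field_simps)
      also have "\<dots> < 4*pi^2 * e^2" by (rule mult_strict_left_mono[OF nw]) simp
      finally show ?thesis .
    qed
    have "norm (Lam u) \<le> C1 * (LINT x:T2|lborel. (cmod (h x))\<^sup>2 / P x) / e + C2 * e"
      unfolding Lu unfolding Lam_def by (rule Cb[OF hL2 e])
    also have "C1 * (LINT x:T2|lborel. (cmod (h x))\<^sup>2 / P x) / e \<le> C1 * (4*pi^2 * e^2) / e"
      using Lh C1 e by (intro divide_right_mono mult_left_mono) auto
    also have "C1 * (4*pi^2 * e^2) / e = 4*pi^2*C1 * e" using e by (simp add: power2_eq_square)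
    finally show ?thesis by (simp add: algebra_simps)
  qed
  then have "norm (Lam u) \<le> 0" by (intro eps_zero) 
  then have "Lam u = 0" by simp
  then show ?thesis using diff by simp
qed



theorem mainTheorem5:
  fixes c :: "nat \<Rightarrow> nat \<Rightarrow> complex" and n m :: nat
    and a :: "nat \<Rightarrow> complex \<Rightarrow> complex \<Rightarrow> complex"
  assumes "n \<ge> 1" and "m \<ge> 1"
    and "bidegree c n m" and "stable2 c n m"
    and a_def: "\<forall>z w \<eta>. z \<noteq> 0 \<longrightarrow>
        (1 - w * cnj \<eta>) * (\<Sum>j<m. a j z w * cnj \<eta> ^ j) =
        z ^ n * (poly2 c n m z w * cnj (poly2 c n m (1 / cnj z) \<eta>)
                 - refl2 c n m z w * cnj (refl2 c n m (1 / cnj z) \<eta>))"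
  defines "p \<equiv> poly2 c n m"
  shows "(\<forall>(j1::int) (j2::int) k1 k2. k1 < m \<longrightarrow> k2 < m \<longrightarrow> (j1 \<noteq> j2 \<or> k1 \<noteq> k2) \<longrightarrow>
            ipw p (\<lambda>z w. z powi (j1 + int n) * w ^ k1) (\<lambda>z w. z powi j2 * a k2 z w) = 0)
       \<and> (\<forall>(j::int) k. k < m \<longrightarrow>
            ipw p (\<lambda>z w. z powi (j + int n) * w ^ k) (\<lambda>z w. z powi j * a k z w) \<noteq> 0)
       \<and> (\<forall>f (j::int) k. inS p m f \<longrightarrow> k < m \<longrightarrow>
            ipw p f (\<lambda>z w. z powi j * a k z w) = 0 \<longrightarrow>
            fourier2 f (j + int n) (int k) = 0)"
proof -
  have st: "stable2 c n m" by fact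
  have ad: "\<forall>z w \<eta>. z \<noteq> 0 \<longrightarrow>
        (1 - w * cnj \<eta>) * (\<Sum>j<m. a j z w * cnj \<eta> ^ j) =
        z ^ n * (poly2 c n m z w * cnj (poly2 c n m (1 / cnj z) \<eta>)
                 - refl2 c n m z w * cnj (refl2 c n m (1 / cnj z) \<eta>))" by (rule a_def)
  show ?thesis unfolding p_def
  proof (intro conjI allI impI)
    fix j1 j2 :: int and k1 k2 assume "k1 < m" "k2 < m" "j1 \<noteq> j2 \<or> k1 \<noteq> k2"
    then show "ipw (poly2 c n m) (\<lambda>z w. z powi (j1 + int n) * w ^ k1) (\<lambda>z w. z powi j2 * a k2 z w) = 0"
      using ipw_mono[OF ad st, of k1 k2 j1 j2] by auto
  next
    fix j :: int and k assume "k < m"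
    then show "ipw (poly2 c n m) (\<lambda>z w. z powi (j + int n) * w ^ k) (\<lambda>z w. z powi j * a k z w) \<noteq> 0"
      using ipw_mono[OF ad st, of k k j j] by auto
  next
    fix f and j :: int and k
    assume "inS (poly2 c n m) m f" "k < m" "ipw (poly2 c n m) f (\<lambda>z w. z powi j * a k z w) = 0"
    then show "fourier2 f (j + int n) (int k) = 0"
      using part3[OF ad st, of k f j] by simp
  qed
qed

end
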